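(* Let $k\ge 1$ and let $\mathcal{H}_k=(V_k,\mathcal{E}_k)$ be a $k$-uniform hypergraph that has no proper $2$-coloring. Let $D_k$ be the directed graph with vertex set $V_k\cup U_k\cup\{s\}$, where $U_k=\{u_E: E\in\mathcal{E}_k\}$ is a set of new vertices, one for each hyperedge, and $s$ is a new vertex, and whose arcs are $sv$ for every $v\in V_k$ and $vu_E$ for every $v\in V_k$ and $E\in\mathcal{E}_k$ with $v\in E$. Then $D_k$ is acyclic, every $u\in U_k$ satisfies $\lambda_{D_k}(s,u)=k$, and $D_k$ contains no two arc-disjoint $(s,U_k)$-arborescences.
   Context: A hypergraph $(V,\mathcal{E})$ is $k$-uniform if every hyperedge has exactly $k$ vertices; a $2$-coloring of $V$ is proper if no hyperedge is monochromatic. $\lambda_D(s,v)$ is the maximum number of arc-disjoint directed $(s,v)$-paths in $D$. An $s$-arborescence is an acyclic subgraph $F=(V'\cup\{s\},A')$ in which every vertex of $V'$ has in-degree exactly $1$; it is an $(s,U)$-arborescence if it contains all vertices of $U$. *)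

theory Defs
  imports Main
begin

definition hypergraph :: "'a set \<Rightarrow> 'a set set \<Rightarrow> bool" where
  "hypergraph V Es \<longleftrightarrow> finite V \<and> (\<forall>E\<in>Es. E \<subseteq> V)"

definition k_uniform :: "nat \<Rightarrow> 'a set set \<Rightarrow> bool" where
  "k_uniform k Es \<longleftrightarrow> (\<forall>E\<in>Es. card E = k)"

definition proper_2_coloring :: "'a set set \<Rightarrow> ('a \<Rightarrow> bool) \<Rightarrow> bool" where
  "proper_2_coloring Es c \<longleftrightarrow> (\<forall>E\<in>Es. \<not> (\<exists>b. \<forall>x\<in>E. c x = b))"

datatype 'a dnode = Src | VNode 'a | UNode "'a set"

definition Dk_verts :: "'a set \<Rightarrow> 'a set set \<Rightarrow> 'a dnode set" where
  "Dk_verts V Es = insert Src (VNode ` V \<union> UNode ` Es)"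

definition Dk_arcs :: "'a set \<Rightarrow> 'a set set \<Rightarrow> ('a dnode \<times> 'a dnode) set" where
  "Dk_arcs V Es = {(Src, VNode v) | v. v \<in> V} \<union> {(VNode v, UNode E) | v E. v \<in> V \<and> E \<in> Es \<and> v \<in> E}"

definition path_arcs :: "'b list \<Rightarrow> ('b \<times> 'b) set" where
  "path_arcs p = set (zip p (tl p))"

definition is_path :: "('b \<times> 'b) set \<Rightarrow> 'b \<Rightarrow> 'b \<Rightarrow> 'b list \<Rightarrow> bool" where
  "is_path A s v p \<longleftrightarrow> p \<noteq> [] \<and> hd p = s \<and> last p = v \<and> distinct p \<and> path_arcs p \<subseteq> A"

definition lambda :: "('b \<times> 'b) set \<Rightarrow> 'b \<Rightarrow> 'b \<Rightarrow> nat" where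
  "lambda A s v = (GREATEST n. \<exists>P :: nat \<Rightarrow> 'b list.
      (\<forall>i<n. is_path A s v (P i)) \<and>
      (\<forall>i<n. \<forall>j<n. i \<noteq> j \<longrightarrow> path_arcs (P i) \<inter> path_arcs (P j) = {}))"

definition s_arborescence :: "'b set \<Rightarrow> ('b \<times> 'b) set \<Rightarrow> 'b \<Rightarrow> 'b set \<Rightarrow> ('b \<times> 'b) set \<Rightarrow> bool" where
  "s_arborescence VD AD s V' A' \<longleftrightarrow>
     s \<notin> V' \<and> V' \<subseteq> VD \<and> A' \<subseteq> AD \<and> A' \<subseteq> insert s V' \<times> insert s V' \<and>
     acyclic A' \<and> (\<forall>v\<in>V'. card {a \<in> A'. snd a = v} = 1)"

definition sU_arborescence :: "'b set \<Rightarrow> ('b \<times> 'b) set \<Rightarrow> 'b \<Rightarrow> 'b set \<Rightarrow> 'b set \<Rightarrow> ('b \<times> 'b) set \<Rightarrow> bool" where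
  "sU_arborescence VD AD s U V' A' \<longleftrightarrow> s_arborescence VD AD s V' A' \<and> U \<subseteq> insert s V'"

end

theory Submission
  imports Defs
begin

lemma path_char:
  assumes "is_path (Dk_arcs V Es) Src (UNode E) p"
  shows "\<exists>v. v \<in> V \<and> v \<in> E \<and> E \<in> Es \<and> p = [Src, VNode v, UNode E]"
proof -
  from assms have ne: "p \<noteq> []" and hd: "hd p = Src" and lst: "last p = UNode E"
    and ar: "path_arcs p \<subseteq> Dk_arcs V Es" by (auto simp: is_path_def)
  obtain rest where p: "p = Src # rest" using ne hd by (cases p) auto
  show ?thesis
  proof (cases rest)
    case Nil then show ?thesis using p lst by simp
  next
    case (Cons x rest2)
    have "(Src, x) \<in> Dk_arcs V Es" using ar p Cons by (auto simp: path_arcs_def)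
    then obtain v where x: "x = VNode v" and v: "v \<in> V" by (auto simp: Dk_arcs_def)
    show ?thesis
    proof (cases rest2)
      case Nil then show ?thesis using p Cons lst x by simp
    next
      case (Cons y rest3)
      have "(VNode v, y) \<in> Dk_arcs V Es" using ar p \<open>rest = x # rest2\<close> Cons x
        by (auto simp: path_arcs_def)
      then obtain E' where y: "y = UNode E'" and "v \<in> E'" "E' \<in> Es" by (auto simp: Dk_arcs_def)
      show ?thesis
      proof (cases rest3)
        case Nil then show ?thesis using p \<open>rest = x # rest2\<close> Cons x y lst v \<open>v \<in> E'\<close> \<open>E' \<in> Es\<close>
          by simp
      next
        case (Cons z rest4)
        have "(UNode E', z) \<in> Dk_arcs V Es" using ar p \<open>rest = x # rest2\<close> \<open>rest2 = y # rest3\<close> Cons y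
          by (auto simp: path_arcs_def)
        then show ?thesis by (auto simp: Dk_arcs_def)
      qed
    qed
  qed
qed

lemma path_intro:
  assumes "v \<in> V" "v \<in> E" "E \<in> Es"
  shows "is_path (Dk_arcs V Es) Src (UNode E) [Src, VNode v, UNode E]"
  using assms by (auto simp: is_path_def path_arcs_def Dk_arcs_def)

lemma lambda_val:
  assumes hg: "hypergraph V Es" and E: "E \<in> Es"
  shows "lambda (Dk_arcs V Es) Src (UNode E) = card E"
proof -
  have EV: "E \<subseteq> V" and fin: "finite E" using hg E by (auto simp: hypergraph_def intro: finite_subset)
  let ?Q = "\<lambda>n. \<exists>P :: nat \<Rightarrow> 'a dnode list.
      (\<forall>i<n. is_path (Dk_arcs V Es) Src (UNode E) (P i)) \<and>
      (\<forall>i<n. \<forall>j<n. i \<noteq> j \<longrightarrow> path_arcs (P i) \<inter> path_arcs (P j) = {})"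
  have Qk: "?Q (card E)"
  proof -
    obtain h where h: "bij_betw h {0..<card E} E" using ex_bij_betw_nat_finite[OF fin] by blast
    define P where "P i = [Src, VNode (h i), UNode E]" for i
    have "\<forall>i<card E. is_path (Dk_arcs V Es) Src (UNode E) (P i)"
      using h EV E unfolding P_def by (auto intro!: path_intro simp: bij_betw_def)
    moreover have "\<forall>i<card E. \<forall>j<card E. i \<noteq> j \<longrightarrow> path_arcs (P i) \<inter> path_arcs (P j) = {}"
    proof (intro allI impI)
      fix i j assume "i < card E" "j < card E" "i \<noteq> j"
      then have "h i \<noteq> h j" using h by (auto simp: bij_betw_def inj_on_def)
      then show "path_arcs (P i) \<inter> path_arcs (P j) = {}" by (auto simp: P_def path_arcs_def)
    qed
    ultimately show ?thesis by blast
  qed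
  have bound: "n \<le> card E" if "?Q n" for n
  proof -
    from that obtain P where P1: "\<forall>i<n. is_path (Dk_arcs V Es) Src (UNode E) (P i)"
      and P2: "\<forall>i<n. \<forall>j<n. i \<noteq> j \<longrightarrow> path_arcs (P i) \<inter> path_arcs (P j) = {}" by blast
    have "\<forall>i<n. \<exists>v. v \<in> E \<and> P i = [Src, VNode v, UNode E]" using P1 path_char by blast
    then obtain g where g: "\<forall>i<n. g i \<in> E \<and> P i = [Src, VNode (g i), UNode E]" by metis
    have "inj_on g {..<n}"
    proof (rule inj_onI)
      fix i j assume "i \<in> {..<n}" "j \<in> {..<n}" "g i = g j"
      then have "P i = P j" using g by auto
      moreover have "path_arcs (P i) \<noteq> {}" using g \<open>i \<in> {..<n}\<close> by (auto simp: path_arcs_def)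
      ultimately show "i = j" using P2 \<open>i \<in> {..<n}\<close> \<open>j \<in> {..<n}\<close>
        by (metis Int_absorb lessThan_iff)
    qed
    moreover have "g ` {..<n} \<subseteq> E" using g by auto
    ultimately have "card {..<n} \<le> card E" using card_inj_on_le fin by blast
    then show ?thesis by simp
  qed
  show ?thesis unfolding lambda_def
    by (rule Greatest_equality[where P="?Q", OF Qk bound])
qed

lemma in_arc:
  assumes "card {a \<in> A. snd a = v} = 1"
  shows "\<exists>x. (x, v) \<in> A"
proof -
  have "{a \<in> A. snd a = v} \<noteq> {}" using assms by (metis card.empty zero_neq_one)
  then obtain a where "a \<in> A" "snd a = v" by blast
  then show ?thesis by (metis prod.collapse)
qed

lemma arb_prop:
  assumes arb: "sU_arborescence (Dk_verts V Es) (Dk_arcs V Es) Src (UNode ` Es) V1 A1"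
    and E: "E \<in> Es"
  shows "\<exists>v\<in>E. (Src, VNode v) \<in> A1"
proof -
  have sub: "A1 \<subseteq> Dk_arcs V Es" and cl: "A1 \<subseteq> insert Src V1 \<times> insert Src V1"
    and inu: "UNode E \<in> V1" and deg: "\<forall>v\<in>V1. card {a \<in> A1. snd a = v} = 1"
    using arb E unfolding sU_arborescence_def s_arborescence_def by (blast, blast, blast, blast)
  obtain x where "(x, UNode E) \<in> A1" using in_arc[of A1 "UNode E"] deg inu by blast
  moreover have "(x, UNode E) \<in> Dk_arcs V Es" using sub \<open>(x, UNode E) \<in> A1\<close> by blast
  then obtain v where "x = VNode v" "v \<in> E" unfolding Dk_arcs_def by blast
  ultimately have v: "x = VNode v" "v \<in> E" "(VNode v, UNode E) \<in> A1" by auto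
  then have "VNode v \<in> V1" using cl by auto
  then obtain y where "(y, VNode v) \<in> A1" using in_arc[of A1 "VNode v"] deg by blast
  then have "(y, VNode v) \<in> Dk_arcs V Es" using sub by blast
  then have "y = Src" unfolding Dk_arcs_def by blast
  then show ?thesis using v \<open>(y, VNode v) \<in> A1\<close> by blast
qed

theorem theorem10:
  fixes k :: nat and V :: "'a set" and Es :: "'a set set"
  assumes "k \<ge> 1"
    and "hypergraph V Es"
    and "k_uniform k Es"
    and "\<not> (\<exists>c. proper_2_coloring Es c)"
  shows "acyclic (Dk_arcs V Es)
    \<and> (\<forall>u \<in> UNode ` Es. lambda (Dk_arcs V Es) Src u = k)
    \<and> \<not> (\<exists>V1 A1 V2 A2.
            sU_arborescence (Dk_verts V Es) (Dk_arcs V Es) Src (UNode ` Es) V1 A1 \<and>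
            sU_arborescence (Dk_verts V Es) (Dk_arcs V Es) Src (UNode ` Es) V2 A2 \<and>
            A1 \<inter> A2 = {})"
proof (intro conjI)
  define rk :: "'a dnode \<Rightarrow> nat" where "rk x = (case x of Src \<Rightarrow> 0 | VNode _ \<Rightarrow> 1 | UNode _ \<Rightarrow> 2)" for x
  have "Dk_arcs V Es \<subseteq> inv_image less_than rk"
    by (auto simp: Dk_arcs_def rk_def)
  then show "acyclic (Dk_arcs V Es)"
    using acyclic_subset wf_acyclic wf_inv_image wf_less_than by blast
  show "\<forall>u \<in> UNode ` Es. lambda (Dk_arcs V Es) Src u = k"
    using lambda_val[OF assms(2)] assms(3) by (auto simp: k_uniform_def)
  show "\<not> (\<exists>V1 A1 V2 A2.
            sU_arborescence (Dk_verts V Es) (Dk_arcs V Es) Src (UNode ` Es) V1 A1 \<and>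
            sU_arborescence (Dk_verts V Es) (Dk_arcs V Es) Src (UNode ` Es) V2 A2 \<and>
            A1 \<inter> A2 = {})"
  proof
    assume "\<exists>V1 A1 V2 A2.
            sU_arborescence (Dk_verts V Es) (Dk_arcs V Es) Src (UNode ` Es) V1 A1 \<and>
            sU_arborescence (Dk_verts V Es) (Dk_arcs V Es) Src (UNode ` Es) V2 A2 \<and>
            A1 \<inter> A2 = {}"
    then obtain V1 A1 V2 A2 where a1: "sU_arborescence (Dk_verts V Es) (Dk_arcs V Es) Src (UNode ` Es) V1 A1"
      and a2: "sU_arborescence (Dk_verts V Es) (Dk_arcs V Es) Src (UNode ` Es) V2 A2"
      and dj: "A1 \<inter> A2 = {}" by blast
    define c where "c x = ((Src, VNode x) \<in> A1)" for x
    have "proper_2_coloring Es c"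
      unfolding proper_2_coloring_def
    proof (intro ballI notI)
      fix E assume E: "E \<in> Es" and "\<exists>b. \<forall>x\<in>E. c x = b"
      then obtain b where b: "\<forall>x\<in>E. c x = b" by blast
      obtain v1 where v1: "v1 \<in> E" "(Src, VNode v1) \<in> A1" using arb_prop[OF a1 E] by blast
      obtain v2 where v2: "v2 \<in> E" "(Src, VNode v2) \<in> A2" using arb_prop[OF a2 E] by blast
      have "b" using b v1 by (auto simp: c_def)
      then have "(Src, VNode v2) \<in> A1" using b v2 by (auto simp: c_def)
      then show False using v2 dj by blast
    qed
    then show False using assms(4) by blast
  qed
qed

end
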